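(* Let $n\ge 1$, let $t_1,\dots,t_{n+1}$ be real nodes in strictly increasing order (or in strictly decreasing order), and let $d_1,\dots,d_{n+1}$ be given real values having alternating signs. Define $$d_{i,0}:=d_i,\quad i=1,\dots,n+1,\qquad d_{i,k}:=\frac{d_{i+1,k-1}-d_{i,k-1}}{t_{i+k}-t_i},\quad k=1,\dots,n,\; i=1,\dots,n+1-k.$$ Then all the values $d_{i,k}$ can be computed to high relative accuracy by this recursion.
   Context: A real quantity is said to be computed to high relative accuracy (HRA) in a floating-point arithmetic with unit roundoff $u$ if the relative error of the computed value is bounded by $Cu$, where $C>0$ is a constant independent of the arithmetic precision. An algorithm satisfies the non-inaccurate-cancellation (NIC) condition (which suffices for HRA) if it only evaluates products, quotients, sums of numbers of the same sign, subtractions of numbers of opposite sign, and subtractions of initial data. The initial data here are the nodes $t_i$ and the values $d_i$. *)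

theory Defs
  imports Complex_Main
begin

fun dd :: "(nat \<Rightarrow> real) \<Rightarrow> (nat \<Rightarrow> real) \<Rightarrow> nat \<Rightarrow> nat \<Rightarrow> real" where
  "dd t d i 0 = d i"
| "dd t d i (Suc k) = (dd t d (i+1) k - dd t d i k) / (t (i + Suc k) - t i)"

text \<open>Values computed by the same recursion in floating-point arithmetic,
  standard model: every elementary operation op on the (already computed)
  operands returns (a op b)(1+e) with |e| <= u.  The initial data t_i, d_i are
  exact.  es = error of the subtraction in the numerator, et = error of the
  subtraction of nodes t_{i+k} - t_i, eq = error of the quotient.\<close>
fun dd_fl :: "(nat \<Rightarrow> real) \<Rightarrow> (nat \<Rightarrow> real) \<Rightarrow> (nat \<Rightarrow> nat \<Rightarrow> real) \<Rightarrow>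
    (nat \<Rightarrow> nat \<Rightarrow> real) \<Rightarrow> (nat \<Rightarrow> nat \<Rightarrow> real) \<Rightarrow> nat \<Rightarrow> nat \<Rightarrow> real" where
  "dd_fl t d es et eq i 0 = d i"
| "dd_fl t d es et eq i (Suc k) =
     (((dd_fl t d es et eq (i+1) k - dd_fl t d es et eq i k) * (1 + es i (Suc k)))
      / ((t (i + Suc k) - t i) * (1 + et i (Suc k)))) * (1 + eq i (Suc k))"

end

theory Submission imports Defs begin

lemma sub_err:
  fixes x y xh yh a :: real
  assumes "x*y<0" "\<bar>xh - x\<bar> \<le> a*\<bar>x\<bar>" "\<bar>yh - y\<bar> \<le> a*\<bar>y\<bar>"
  shows "\<bar>(xh - yh) - (x-y)\<bar> \<le> a*\<bar>x-y\<bar>"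
proof -
  have e: "\<bar>x-y\<bar> = \<bar>x\<bar>+\<bar>y\<bar>" using assms(1) by (auto simp: abs_if mult_less_0_iff)
  have "\<bar>(xh - yh) - (x-y)\<bar> \<le> \<bar>xh - x\<bar> + \<bar>yh - y\<bar>" by linarith
  also have "\<dots> \<le> a*\<bar>x\<bar> + a*\<bar>y\<bar>" using assms by linarith
  finally show ?thesis by (simp add: e distrib_left)
qed

lemma factor:
  fixes c p q r b u :: real
  assumes "\<bar>c\<bar> \<le> b" "b \<le> 1" "\<bar>p\<bar>\<le>u" "\<bar>q\<bar>\<le>u" "\<bar>r\<bar>\<le>u" "u \<le> 1/2" "0\<le>u"
  shows "\<bar>(1+c)*(1+p)*(1+q)/(1+r) - 1\<bar> \<le> 2*b + 14*u"
proof -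
  have r: "1 + r \<ge> 1/2" using assms by linarith
  have pq: "\<bar>(1+p)*(1+q) - 1\<bar> \<le> 3*u"
  proof -
    have "(1+p)*(1+q) - 1 = p + q + p*q" by algebra
    moreover have "\<bar>p*q\<bar> \<le> u"
    proof -
      have "\<bar>p*q\<bar> = \<bar>p\<bar>*\<bar>q\<bar>" by (simp add: abs_mult)
      also have "\<dots> \<le> 1*u" using assms by (intro mult_mono) auto
      finally show ?thesis by simp
    qed
    ultimately show ?thesis using assms by linarith
  qed
  have X: "\<bar>(1+c)*(1+p)*(1+q) - 1\<bar> \<le> b + 6*u"
  proof -
    define m where "m = (1+p)*(1+q) - 1"
    have "(1+c)*(1+p)*(1+q) - 1 = c + m + c*m" by (simp add: m_def algebra_simps)
    moreover have "\<bar>c*m\<bar> \<le> 3*u" 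
    proof -
      have "\<bar>c*m\<bar> = \<bar>c\<bar>*\<bar>m\<bar>" by (simp add: abs_mult)
      also have "\<dots> \<le> 1 * (3*u)" using pq assms m_def
        by (intro mult_mono) auto
      finally show ?thesis by simp
    qed
    ultimately show ?thesis using assms pq m_def by linarith
  qed
  have "(1+c)*(1+p)*(1+q)/(1+r) - 1 = ((1+c)*(1+p)*(1+q) - 1 - r)/(1+r)"
    using r by (simp add: field_simps)
  also have "\<bar>\<dots>\<bar> = \<bar>(1+c)*(1+p)*(1+q) - 1 - r\<bar>/(1+r)" using r by simp
  also have "\<dots> \<le> \<bar>(1+c)*(1+p)*(1+q) - 1 - r\<bar>/(1/2)"
    using r by (intro divide_left_mono) auto
  also have "\<dots> = 2*\<bar>(1+c)*(1+p)*(1+q) - 1 - r\<bar>" by simp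
  also have "\<dots> \<le> 2*b + 14*u"
  proof -
    have "\<bar>(1+c)*(1+p)*(1+q) - 1 - r\<bar> \<le> b + 7*u"
      by (rule order_trans[OF abs_triangle_ineq4]) (use X assms in linarith)
    moreover have "\<And>x::real. x \<le> b + 7*u \<Longrightarrow> 2*x \<le> 2*b + 14*u" by linarith
    ultimately show ?thesis by blast
  qed
  finally show ?thesis .
qed

lemma mono_inc:
  fixes t :: "nat \<Rightarrow> real"
  assumes "\<forall>i\<in>{1..n}. t i < t (i+1)"
  shows "1 \<le> i \<Longrightarrow> i < j \<Longrightarrow> j \<le> n+1 \<Longrightarrow> t i < t j"
proof (induction j)
  case 0 then show ?case by simp
next
  case (Suc j)
  show ?case
  proof (cases "i = j")
    case True then show ?thesis using assms Suc.prems by auto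
  next
    case False
    then have "t i < t j" using Suc by auto
    moreover have "t j < t (j+1)" using assms Suc.prems False by auto
    ultimately show ?thesis by simp
  qed
qed

lemma mono_dec:
  fixes t :: "nat \<Rightarrow> real"
  assumes "\<forall>i\<in>{1..n}. t i > t (i+1)"
  shows "1 \<le> i \<Longrightarrow> i < j \<Longrightarrow> j \<le> n+1 \<Longrightarrow> t i > t j"
  using mono_inc[of n "\<lambda>i. - t i" i j] assms by auto

lemma prod_neg: 
  fixes a b c :: real
  assumes "a*b < 0" "b*c < 0" shows "(b-a)*(c-b) < 0"
proof (cases "b > 0")
  case True
  then have "a < 0" "c < 0" using assms by (auto simp: mult_less_0_iff)
  then show ?thesis using True by (intro mult_pos_neg) auto
next
  case False
  then have "b < 0" using assms by (cases "b = 0") auto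
  then have "a > 0" "c > 0" using assms by (auto simp: mult_less_0_iff)
  then show ?thesis using \<open>b < 0\<close> by (intro mult_neg_pos) auto
qed

lemma sign_alt:
  fixes t d :: "nat \<Rightarrow> real"
  assumes H: "\<forall>i j i' j'. 1\<le>i \<longrightarrow> i<j \<longrightarrow> j\<le>n+1 \<longrightarrow> 1\<le>i' \<longrightarrow> i'<j' \<longrightarrow> j'\<le>n+1 \<longrightarrow> (t j - t i)*(t j' - t i') > 0"
    and D: "\<forall>i\<in>{1..n}. d i * d (i+1) < 0"
  shows "1 \<le> i \<Longrightarrow> i+k+1 \<le> n+1 \<Longrightarrow> dd t d i k * dd t d (i+1) k < 0"
proof (induction k arbitrary: i)
  case 0 then show ?case using D by auto
next
  case (Suc k)
  define a where "a = dd t d i k"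
  define b where "b = dd t d (i+1) k"
  define c where "c = dd t d (i+1+1) k"
  have ab: "a*b < 0" unfolding a_def b_def using Suc by auto
  have bc: "b*c < 0" unfolding c_def b_def using Suc.IH[of "i+1"] Suc.prems by auto
  define D1 where "D1 = t (i + Suc k) - t i"
  define D2 where "D2 = t (i + 1 + Suc k) - t (i+1)"
  have DD: "D1 * D2 > 0" unfolding D1_def D2_def using H Suc.prems by auto
  have e1: "dd t d i (Suc k) = (b - a)/D1" by (simp only: dd.simps a_def b_def D1_def)
  have e2: "dd t d (i+1) (Suc k) = (c - b)/D2" by (simp only: dd.simps c_def b_def D2_def)
  have "dd t d i (Suc k) * dd t d (i+1) (Suc k) = ((b-a)*(c-b))/(D1*D2)"
    unfolding e1 e2 by simp
  also have "\<dots> < 0" using prod_neg[OF ab bc] DD by (simp add: divide_neg_pos)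
  finally show ?case .
qed

lemma nonzero:
  fixes t d :: "nat \<Rightarrow> real"
  assumes H: "\<forall>i j i' j'. 1\<le>i \<longrightarrow> i<j \<longrightarrow> j\<le>n+1 \<longrightarrow> 1\<le>i' \<longrightarrow> i'<j' \<longrightarrow> j'\<le>n+1 \<longrightarrow> (t j - t i)*(t j' - t i') > 0"
    and D: "\<forall>i\<in>{1..n}. d i * d (i+1) < 0" and n: "n \<ge> 1"
  shows "1 \<le> i \<Longrightarrow> i+k \<le> n+1 \<Longrightarrow> dd t d i k \<noteq> 0"
proof (cases k)
  case 0
  assume i: "1 \<le> i" "i+k \<le> n+1"
  show ?thesis
  proof (cases "i \<le> n")
    case True
    then have "d i * d (i+1) < 0" using D i by auto
    then show ?thesis using 0 by auto
  next
    case False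
    then have "i = (i-1)+1" "i-1 \<in> {1..n}" using i 0 n by auto
    then have "d (i-1) * d i < 0" using D by metis
    then show ?thesis using 0 by auto
  qed
next
  case (Suc m)
  assume i: "1 \<le> i" "i+k \<le> n+1"
  have "dd t d i m * dd t d (i+1) m < 0" using sign_alt[OF H D, of i m] i Suc by auto
  then have "dd t d (i+1) m - dd t d i m \<noteq> 0" by auto
  moreover have "t (i + Suc m) - t i \<noteq> 0"
  proof
    assume z: "t (i + Suc m) - t i = 0"
    have "(t (i + Suc m) - t i) * (t (i + Suc m) - t i) > 0" using H i Suc by auto
    then show False using z by simp
  qed
  ultimately show ?thesis using Suc by simp
qed

lemma err:
  fixes t d :: "nat \<Rightarrow> real"
  assumes H: "\<forall>i j i' j'. 1\<le>i \<longrightarrow> i<j \<longrightarrow> j\<le>n+1 \<longrightarrow> 1\<le>i' \<longrightarrow> i'<j' \<longrightarrow> j'\<le>n+1 \<longrightarrow> (t j - t i)*(t j' - t i') > 0"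
    and D: "\<forall>i\<in>{1..n}. d i * d (i+1) < 0" and n: "n \<ge> 1"
    and u: "0 < u" "16^n * u \<le> 1"
    and E: "\<forall>i k. \<bar>es i k\<bar> \<le> u \<and> \<bar>et i k\<bar> \<le> u \<and> \<bar>eq i k\<bar> \<le> u"
  shows "1 \<le> i \<Longrightarrow> i+k \<le> n+1 \<Longrightarrow>
     \<bar>dd_fl t d es et eq i k - dd t d i k\<bar> \<le> (16^k - 1) * u * \<bar>dd t d i k\<bar>"
proof (induction k arbitrary: i)
  case 0 then show ?case by simp
next
  case (Suc k)
  define a where "a = (16^k - 1) * u"
  define x where "x = dd t d (i+1) k"
  define y where "y = dd t d i k"
  define xh where "xh = dd_fl t d es et eq (i+1) k"
  define yh where "yh = dd_fl t d es et eq i k"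
  define T where "T = t (i + Suc k) - t i"
  have xy: "x*y < 0" using sign_alt[OF H D, of i k] Suc.prems unfolding x_def y_def
    by (simp add: mult.commute)
  have bx: "\<bar>xh - x\<bar> \<le> a*\<bar>x\<bar>" using Suc.IH[of "i+1"] Suc.prems
    unfolding xh_def x_def a_def by auto
  have by': "\<bar>yh - y\<bar> \<le> a*\<bar>y\<bar>" using Suc.IH[of i] Suc.prems
    unfolding yh_def y_def a_def by auto
  have se: "\<bar>(xh - yh) - (x-y)\<bar> \<le> a*\<bar>x-y\<bar>" by (rule sub_err[OF xy bx by'])
  have nz: "x - y \<noteq> 0" using xy by auto
  have Tnz: "T \<noteq> 0"
  proof
    assume z: "T = 0"
    have "T * T > 0" using H Suc.prems unfolding T_def by auto
    then show False using z by simp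
  qed
  define c where "c = ((xh - yh) - (x-y))/(x-y)"
  have c: "\<bar>c\<bar> \<le> a" using se nz unfolding c_def by (simp add: abs_divide divide_le_eq)
  have kn: "k \<le> n" using Suc.prems by auto
  have p16: "(16::real)^k \<le> 16^n" using kn by (intro power_increasing) auto
  have p16n: "(16::real) \<le> 16^n" using n
    by (metis power_increasing power_one_right numeral_le_one_iff semiring_norm(69) zero_less_numeral less_imp_le_nat not_le  one_le_numeral)
  have a1: "a \<le> 1"
  proof -
    have "16^k - 1 \<le> (16::real)^n" using p16 by linarith
    then have "a \<le> 16^n * u" unfolding a_def using u by (intro mult_right_mono) auto
    then show ?thesis using u by linarith
  qed
  have uh: "u \<le> 1/2"
  proof -
    have "16 * u \<le> 16^n * u" using p16n u by (intro mult_right_mono) auto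
    then show ?thesis using u by linarith
  qed
  have e1: "1 + et i (Suc k) \<noteq> 0"
  proof -
    have "\<bar>et i (Suc k)\<bar> \<le> u" using E by blast
    then show ?thesis using uh by linarith
  qed
  have xhyh: "xh - yh = (x-y)*(1+c)" using nz unfolding c_def by (simp add: field_simps)
  have ex: "dd t d i (Suc k) = (x - y)/T" by (simp only: dd.simps x_def y_def T_def)
  have fl: "dd_fl t d es et eq i (Suc k) = ((xh - yh)*(1 + es i (Suc k)))/(T*(1 + et i (Suc k))) * (1 + eq i (Suc k))"
    by (simp only: dd_fl.simps xh_def yh_def T_def)
  define F where "F = (1+c)*(1+es i (Suc k))*(1+eq i (Suc k))/(1+et i (Suc k))"
  have flF: "dd_fl t d es et eq i (Suc k) = dd t d i (Suc k) * F"
    unfolding fl ex F_def xhyh using Tnz e1 by (simp add: field_simps)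
  have F: "\<bar>F - 1\<bar> \<le> 2*a + 14*u" unfolding F_def
    using factor[OF c a1, of "es i (Suc k)" u "eq i (Suc k)" "et i (Suc k)"] E uh u by auto
  have "\<bar>dd_fl t d es et eq i (Suc k) - dd t d i (Suc k)\<bar> = \<bar>dd t d i (Suc k)\<bar> * \<bar>F - 1\<bar>"
  proof -
    have "dd t d i (Suc k) * F - dd t d i (Suc k) = dd t d i (Suc k) * (F - 1)" by algebra
    then show ?thesis unfolding flF by (simp only: abs_mult)
  qed
  also have "\<dots> \<le> \<bar>dd t d i (Suc k)\<bar> * (2*a + 14*u)" using F by (intro mult_left_mono) auto
  also have "\<dots> \<le> \<bar>dd t d i (Suc k)\<bar> * ((16^Suc k - 1) * u)"
  proof (intro mult_left_mono)
    obtain z where z: "z = (16::real)^k" by blast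
    have z1: "1 \<le> z" using z by simp
    have "2*(z - 1) + 14 \<le> 16*z - 1" using z1 by (simp add: algebra_simps)
    then have "2*(16^k - 1) + 14 \<le> (16^Suc k - 1::real)" using z by (simp only: power_Suc)
    then have "(2*(16^k - 1) + 14) * u \<le> (16^Suc k - 1::real) * u" using u by (intro mult_right_mono) auto
    then show "2*a + 14*u \<le> (16^Suc k - 1) * u" unfolding a_def by (simp add: algebra_simps)
  qed auto
  finally show ?case by (simp add: algebra_simps)
qed

theorem theorem1:
  fixes n :: nat
  assumes "n \<ge> 1"
  shows "\<exists>C>0. \<exists>u0>0. \<forall>(t :: nat \<Rightarrow> real) (d :: nat \<Rightarrow> real) u es et eq.
     ((\<forall>i\<in>{1..n}. t i < t (i+1)) \<or> (\<forall>i\<in>{1..n}. t i > t (i+1))) \<longrightarrow>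
     (\<forall>i\<in>{1..n}. d i * d (i+1) < 0) \<longrightarrow>
     0 < u \<longrightarrow> u \<le> u0 \<longrightarrow>
     (\<forall>i k. \<bar>es i k\<bar> \<le> u \<and> \<bar>et i k\<bar> \<le> u \<and> \<bar>eq i k\<bar> \<le> u) \<longrightarrow>
     (\<forall>k\<in>{0..n}. \<forall>i\<in>{1..n+1-k}.
        \<bar>dd_fl t d es et eq i k - dd t d i k\<bar> \<le> C * u * \<bar>dd t d i k\<bar>)"
proof -
  have main: "\<bar>dd_fl t d es et eq i k - dd t d i k\<bar> \<le> 16^n * u * \<bar>dd t d i k\<bar>"
  if  T: "(\<forall>i\<in>{1..n}. t i < t (i+1)) \<or> (\<forall>i\<in>{1..n}. t i > t (i+1))"
    and D: "\<forall>i\<in>{1..n}. d i * d (i+1) < 0" and u: "0 < u" "u \<le> 1/16^n"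
    and E: "\<forall>i k. \<bar>es i k\<bar> \<le> u \<and> \<bar>et i k\<bar> \<le> u \<and> \<bar>eq i k\<bar> \<le> u"
    and k: "k \<in> {0..n}" and i: "i \<in> {1..n+1-k}"
  for t d :: "nat \<Rightarrow> real" and u :: real and es et eq :: "nat \<Rightarrow> nat \<Rightarrow> real" and k i
  proof -
  have H: "\<forall>i j i' j'. 1\<le>i \<longrightarrow> i<j \<longrightarrow> j\<le>n+1 \<longrightarrow> 1\<le>i' \<longrightarrow> i'<j' \<longrightarrow> j'\<le>n+1 \<longrightarrow> (t j - t i)*(t j' - t i') > 0"
    using T
  proof
    assume a: "\<forall>i\<in>{1..n}. t i < t (i+1)"
    show ?thesis using mono_inc[OF a] by (auto intro!: mult_pos_pos)
  next
    assume a: "\<forall>i\<in>{1..n}. t i > t (i+1)"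
    show ?thesis using mono_dec[OF a] by (auto intro!: mult_neg_neg)
  qed
  have u16: "16^n * u \<le> 1" using u by (simp add: field_simps)
  have "\<bar>dd_fl t d es et eq i k - dd t d i k\<bar> \<le> (16^k - 1) * u * \<bar>dd t d i k\<bar>"
    using err[OF H D assms u(1) u16 E, of i k] i k by auto
  also have "\<dots> \<le> 16^n * u * \<bar>dd t d i k\<bar>"
  proof (rule mult_right_mono)
    have "(16::real)^k \<le> 16^n" using k by (intro power_increasing) auto
    then have "16^k - 1 \<le> (16::real)^n" by linarith
    then show "(16^k - 1) * u \<le> 16^n * u" using u by (intro mult_right_mono) auto
  qed simp
  finally show ?thesis .
  qed
  have p: "(0::real) < 16^n" "(0::real) < 1/16^n" by auto
  show ?thesis
    apply (rule exI[of _ "(16::real)^n"])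
    apply (rule conjI, rule p(1))
    apply (rule exI[of _ "1/(16::real)^n"])
    apply (rule conjI, rule p(2))
    apply (intro allI impI ballI)
    apply (rule main)
    apply assumption+
    done
qed

end
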